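(* Let $\boldsymbol{X}\in\mathbb{R}^{n\times d}$ have rows $\boldsymbol{x}_i$ with $\lVert\boldsymbol{x}_i\rVert_2\le\gamma$ for all $i$, let $\boldsymbol{W}_Q,\boldsymbol{W}_K\in\mathbb{R}^{d\times d_k}$, $\tau>0$, and define $\boldsymbol{P}_{ij}=-\lVert\boldsymbol{x}_i^T\boldsymbol{W}_Q-\boldsymbol{x}_j^T\boldsymbol{W}_K\rVert_2^2/\tau$ and $\boldsymbol{A}=\mathrm{softmax}(\boldsymbol{P})$. Then $\alpha:=\max_{i,j}\lvert\boldsymbol{P}_{ij}\rvert\le(\lVert\boldsymbol{W}_K\rVert_2+\lVert\boldsymbol{W}_Q\rVert_2)^2\gamma^2/\tau$, and consequently for every $\boldsymbol{W}_V\in\mathbb{R}^{d\times d}$, $$\lVert\mathrm{HC}[\boldsymbol{A}\boldsymbol{X}\boldsymbol{W}_V]\rVert_F\le\sqrt{\frac{ne^{2\alpha}}{e^{2\alpha}+n-1}}\,\lVert\boldsymbol{W}_V\rVert_2\lVert\mathrm{HC}[\boldsymbol{X}]\rVert_F .$$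
   Context: $\mathrm{softmax}$ is applied row-wise: $\mathrm{softmax}(\boldsymbol{P})_{ij}=e^{\boldsymbol{P}_{ij}}/\sum_t e^{\boldsymbol{P}_{it}}$. $\mathrm{HC}[\boldsymbol{X}]=(\boldsymbol{I}-\frac1n\boldsymbol{1}\boldsymbol{1}^T)\boldsymbol{X}$ with $\boldsymbol{1}$ the all-ones vector. $\lVert\cdot\rVert_F$ Frobenius norm, $\lVert\cdot\rVert_2$ spectral norm. *)

theory Defs
  imports "HOL-Analysis.Analysis"
begin

definition softmax :: "real^'n^'m \<Rightarrow> real^'n^'m" where
  "softmax P = (\<chi> i j. exp (P$i$j) / (\<Sum>t\<in>UNIV. exp (P$i$t)))"

definition HC :: "real^'d^'n \<Rightarrow> real^'d^'n" where
  "HC X = (\<chi> i j. X$i$j - (\<Sum>k\<in>UNIV. X$k$j) / real CARD('n))"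

definition spec_norm :: "real^'c^'r \<Rightarrow> real" where
  "spec_norm M = onorm (\<lambda>v. M *v v)"

definition frob_norm :: "real^'c^'r \<Rightarrow> real" where
  "frob_norm M = sqrt (\<Sum>i\<in>UNIV. \<Sum>j\<in>UNIV. (M$i$j)^2)"

definition logits :: "real^'d^'n \<Rightarrow> real^'k^'d \<Rightarrow> real^'k^'d \<Rightarrow> real \<Rightarrow> real^'n^'n" where
  "logits X WQ WK \<tau> = (\<chi> i j. - ((norm ((X$i) v* WQ - (X$j) v* WK))^2) / \<tau>)"

end

theory Submission
  imports Defs
begin

lemma vm_norm:
  fixes v :: "real^'r" and M :: "real^'c^'r"
  shows "norm (v v* M) \<le> spec_norm M * norm v"
proof -
  let ?w = "v v* M" and ?S = "spec_norm M"
  have S0: "0 \<le> ?S" unfolding spec_norm_def by (rule onorm_pos_le) simp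
  have "norm ?w ^ 2 = ?w \<bullet> ?w" by (simp add: power2_norm_eq_inner)
  also have "\<dots> = v \<bullet> (M *v ?w)" by (rule dot_lmul_matrix)
  also have "\<dots> \<le> norm v * norm (M *v ?w)" by (rule norm_cauchy_schwarz)
  also have "\<dots> \<le> norm v * (?S * norm ?w)"
    unfolding spec_norm_def
    by (intro mult_left_mono onorm) simp_all
  finally have h: "norm ?w * norm ?w \<le> (?S * norm v) * norm ?w"
    by (simp add: power2_eq_square algebra_simps)
  show ?thesis
  proof (cases "norm ?w = 0")
    case True then show ?thesis using S0 by simp
  next
    case False then have "norm ?w > 0" by simp
    with h show ?thesis by (simp add: mult_le_cancel_right)
  qed
qed

lemma frob_sq: "frob_norm M ^ 2 = (\<Sum>i\<in>UNIV. norm (M$i) ^ 2)"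
proof -
  have "norm (M$i) ^ 2 = (\<Sum>j\<in>UNIV. (M$i$j)^2)" for i
    by (simp only: power2_norm_eq_inner) (simp add: inner_vec_def power2_eq_square)
  then show ?thesis unfolding frob_norm_def by (simp add: sum_nonneg)
qed

lemma row_mul: "(A ** B)$i = (A$i) v* B"
  by (simp add: vec_eq_iff matrix_matrix_mult_def vector_matrix_mult_def mult.commute)

lemma row_mul2: "(A ** B)$i = (\<Sum>k\<in>UNIV. A$i$k *\<^sub>R B$k)"
  by (simp add: vec_eq_iff matrix_matrix_mult_def sum_component)

lemma HC_shift:
  fixes Z Z' :: "real^'d^'n"
  assumes "\<And>i j. Z$i$j = Z'$i$j + c$j"
  shows "HC Z = HC Z'"
proof -
  have "(\<Sum>k\<in>UNIV. Z$k$j) = (\<Sum>k\<in>UNIV. Z'$k$j) + real CARD('n) * c$j" for j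
    by (simp add: assms sum.distrib)
  then show ?thesis unfolding HC_def
    by (simp add: vec_eq_iff assms add_divide_distrib)
qed

lemma sq_expand:
  fixes f :: "'a \<Rightarrow> real"
  shows "(\<Sum>i\<in>I. (f i - m)^2) = (\<Sum>i\<in>I. (f i)^2) - 2 * m * sum f I + real (card I) * m^2"
proof -
  have "(\<Sum>i\<in>I. (f i - m)^2) = (\<Sum>i\<in>I. (f i)^2 - (2*m) * f i + m^2)"
    by (simp add: power2_diff algebra_simps)
  also have "\<dots> = (\<Sum>i\<in>I. (f i)^2) - (2*m) * sum f I + real (card I) * m^2"
    by (simp add: sum.distrib sum_subtractf sum_distrib_left)
  finally show ?thesis by simp
qed

lemma center_le:
  fixes f :: "'a \<Rightarrow> real"
  assumes "finite I" "I \<noteq> {}"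
  shows "(\<Sum>i\<in>I. (f i - sum f I / real (card I))^2) \<le> (\<Sum>i\<in>I. (f i)^2)"
proof -
  let ?m = "sum f I / real (card I)"
  have c: "real (card I) > 0" using assms by (simp add: card_gt_0_iff)
  have "(\<Sum>i\<in>I. (f i - ?m)^2) = (\<Sum>i\<in>I. (f i)^2) - 2 * ?m * sum f I + real (card I) * ?m^2"
    by (rule sq_expand)
  also have "2 * ?m * sum f I = 2 * real (card I) * ?m^2" using c by (simp add: power2_eq_square)
  finally show ?thesis using c by (simp add: zero_le_mult_iff)
qed

lemma frob_HC_le: "frob_norm (HC (Z::real^'d^'n)) \<le> frob_norm Z"
proof -
  have "(\<Sum>i\<in>UNIV. \<Sum>j\<in>UNIV. ((HC Z)$i$j)^2) = (\<Sum>j\<in>UNIV. \<Sum>i\<in>UNIV. ((HC Z)$i$j)^2)"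
    by (rule sum.swap)
  also have "\<dots> \<le> (\<Sum>j\<in>UNIV. \<Sum>i\<in>UNIV. (Z$i$j)^2)"
    apply (rule sum_mono)
    unfolding HC_def using center_le[of "UNIV::'n set"] by simp
  also have "\<dots> = (\<Sum>i\<in>UNIV. \<Sum>j\<in>UNIV. (Z$i$j)^2)" by (rule sum.swap)
  finally show ?thesis unfolding frob_norm_def by simp
qed

lemma wcs:
  fixes a t :: "'a \<Rightarrow> real"
  assumes "finite I" "\<And>k. k\<in>I \<Longrightarrow> a k \<ge> 0" "sum a I = 1"
  shows "(\<Sum>k\<in>I. a k * t k)^2 \<le> (\<Sum>k\<in>I. a k * (t k)^2)"
proof -
  let ?m = "\<Sum>k\<in>I. a k * t k"
  have "0 \<le> (\<Sum>k\<in>I. a k * (t k - ?m)^2)" using assms by (intro sum_nonneg) simp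
  also have "\<dots> = (\<Sum>k\<in>I. a k * (t k)^2) - 2 * ?m * ?m + ?m^2 * sum a I"
    by (simp add: power2_diff algebra_simps sum.distrib sum_subtractf sum_distrib_left sum_distrib_right)
  finally show ?thesis using assms by (simp add: power2_eq_square)
qed

lemma convex_norm:
  fixes y :: "'a \<Rightarrow> 'b::real_normed_vector"
  assumes "finite I" "\<And>k. k\<in>I \<Longrightarrow> a k \<ge> 0" "sum a I = 1"
  shows "norm (\<Sum>k\<in>I. a k *\<^sub>R y k)^2 \<le> (\<Sum>k\<in>I. a k * norm (y k)^2)"
proof -
  have "norm (\<Sum>k\<in>I. a k *\<^sub>R y k) \<le> (\<Sum>k\<in>I. norm (a k *\<^sub>R y k))" by (rule norm_sum)
  also have "\<dots> = (\<Sum>k\<in>I. a k * norm (y k))" using assms(2) by (intro sum.cong) auto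
  finally have "norm (\<Sum>k\<in>I. a k *\<^sub>R y k)^2 \<le> (\<Sum>k\<in>I. a k * norm (y k))^2"
    by (intro power_mono) auto
  also have "\<dots> \<le> (\<Sum>k\<in>I. a k * norm (y k)^2)" by (rule wcs[OF assms])
  finally show ?thesis .
qed

lemma part1:
  fixes X :: "real^'d^'n" and WQ WK :: "real^'k^'d" and \<gamma> \<tau> :: real
  assumes rows: "\<forall>i. norm (X$i) \<le> \<gamma>" and tau: "\<tau> > 0"
  shows "\<bar>logits X WQ WK \<tau> $ i $ j\<bar> \<le> (spec_norm WK + spec_norm WQ)^2 * \<gamma>^2 / \<tau>"
proof -
  have g0: "0 \<le> \<gamma>" using rows norm_ge_zero order_trans by metis
  have SQ: "0 \<le> spec_norm WQ" "0 \<le> spec_norm WK"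
    unfolding spec_norm_def by (rule onorm_pos_le, simp)+
  have "norm ((X$i) v* WQ - (X$j) v* WK) \<le> norm ((X$i) v* WQ) + norm ((X$j) v* WK)"
    by (rule norm_triangle_ineq4)
  also have "\<dots> \<le> spec_norm WQ * \<gamma> + spec_norm WK * \<gamma>"
    using vm_norm[of "X$i" WQ] vm_norm[of "X$j" WK] rows SQ
    by (meson add_mono mult_left_mono order_trans)
  finally have h: "norm ((X$i) v* WQ - (X$j) v* WK) \<le> (spec_norm WK + spec_norm WQ) * \<gamma>"
    by (simp add: algebra_simps)
  have "(norm ((X$i) v* WQ - (X$j) v* WK))^2 \<le> ((spec_norm WK + spec_norm WQ) * \<gamma>)^2"
    by (rule power_mono[OF h]) simp
  then have "(norm ((X$i) v* WQ - (X$j) v* WK))^2 / \<tau> \<le> (spec_norm WK + spec_norm WQ)^2 * \<gamma>^2 / \<tau>"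
    using tau by (simp add: divide_right_mono power_mult_distrib)
  then show ?thesis using tau unfolding logits_def by simp
qed

theorem mainTheorem9:
  fixes X :: "real^'d^'n" and WQ WK :: "real^'k^'d" and \<gamma> \<tau> :: real
  assumes rows: "\<forall>i. norm (X$i) \<le> \<gamma>"
    and tau: "\<tau> > 0"
  shows "let P = logits X WQ WK \<tau>; A = softmax P;
             \<alpha> = Max {\<bar>P$i$j\<bar> | i j. True};
             n = real CARD('n)
         in \<alpha> \<le> (spec_norm WK + spec_norm WQ)^2 * \<gamma>^2 / \<tau>
          \<and> (\<forall>WV :: real^'d^'d.
               frob_norm (HC (A ** X ** WV))
                 \<le> sqrt (n * exp (2*\<alpha>) / (exp (2*\<alpha>) + n - 1)) * spec_norm WV * frob_norm (HC X))"
proof -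
  define P where "P = logits X WQ WK \<tau>"
  define A where "A = softmax P"
  define \<alpha> where "\<alpha> = Max {\<bar>P$i$j\<bar> | i j. True}"
  define n where "n = real CARD('n)"
  define E where "E = exp (2*\<alpha>)"
  have setE: "{\<bar>P$i$j\<bar> | i j. True} = (\<lambda>p. \<bar>P$fst p$snd p\<bar>) ` UNIV"
    by (auto intro!: image_eqI[where x="(i,j)" for i j])
  have fin: "finite {\<bar>P$i$j\<bar> | i j. True}" unfolding setE by simp
  have ne: "{\<bar>P$i$j\<bar> | i j. True} \<noteq> {}" by auto
  have Pa: "\<bar>P$i$j\<bar> \<le> \<alpha>" for i j unfolding \<alpha>_def by (rule Max_ge[OF fin]) auto
  have P0: "P$i$j \<le> 0" for i j unfolding P_def logits_def using tau by simp
  have a0: "0 \<le> \<alpha>" using Pa[of undefined undefined] by simp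
  have part1': "\<alpha> \<le> (spec_norm WK + spec_norm WQ)^2 * \<gamma>^2 / \<tau>"
    unfolding \<alpha>_def using fin ne part1[OF rows tau] by (auto simp: Max_le_iff P_def)
  have n1: "n \<ge> 1" unfolding n_def by (simp add: Suc_leI)
  have E1: "E \<ge> 1" unfolding E_def using a0 by simp
  have Adef: "A$i$j = exp (P$i$j) / (\<Sum>t\<in>UNIV. exp (P$i$t))" for i j
    unfolding A_def softmax_def by simp
  have Spos: "(\<Sum>t\<in>UNIV. exp (P$i$t)) > 0" for i by (rule sum_pos) auto
  have A0: "A$i$j \<ge> 0" for i j using Spos[of i] unfolding Adef by simp
  have Arow: "(\<Sum>j\<in>UNIV. A$i$j) = 1" for i
    using Spos[of i] unfolding Adef by (simp add: sum_divide_distrib[symmetric])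
  have Ale: "A$i$k \<le> E / (E + n - 1)" for i k
  proof -
    let ?S = "\<Sum>t\<in>UNIV. exp (P$i$t)"
    let ?u = "exp (P$i$k)"
    let ?b = "(n - 1) * exp (-(2*\<alpha>))"
    have "(\<Sum>t\<in>UNIV-{k}. exp (P$i$t)) \<ge> real (card (UNIV-{k})) * exp (-(2*\<alpha>))"
    proof (rule sum_bounded_below)
      fix t show "exp (-(2*\<alpha>)) \<le> exp (P$i$t)" using Pa[of i t] a0 by simp
    qed
    moreover have "real (card (UNIV - {k})) = n - 1"
      unfolding n_def by (simp add: card_Diff_singleton of_nat_diff Suc_leI)
    moreover have "?S = ?u + (\<Sum>t\<in>UNIV-{k}. exp (P$i$t))"
      by (simp add: sum.remove)
    ultimately have S: "?S \<ge> ?u + ?b" by simp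
    have b0: "?b \<ge> 0" using n1 by simp
    have u1: "?u \<le> 1" using P0[of i k] by simp
    have u0: "?u > 0" by simp
    have "A$i$k = ?u / ?S" by (rule Adef)
    also have "\<dots> \<le> ?u / (?u + ?b)"
      using S u0 b0 Spos[of i] by (intro divide_left_mono) (auto intro!: mult_pos_pos add_pos_nonneg)
    also have "\<dots> \<le> 1 / (1 + ?b)"
    proof -
      have "?u * ?b \<le> ?b" using u1 u0 b0 by (intro mult_left_le_one_le) auto
      then have "?u * (1 + ?b) \<le> ?u + ?b" by (simp add: distrib_left)
      moreover have "?u + ?b > 0" "1 + ?b > 0" using u0 b0 by linarith+
      ultimately show ?thesis by (simp add: divide_simps)
    qed
    also have "\<dots> = E / (E + n - 1)"
    proof -
      have e: "exp (-(2*\<alpha>)) = 1 / E" unfolding E_def by (simp add: exp_minus divide_inverse)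
      have "1 + ?b = (E + n - 1) / E" unfolding e using E1 by (simp add: field_simps)
      then show ?thesis using E1 n1 by simp
    qed
    finally show ?thesis .
  qed
  define c where "c = n * E / (E + n - 1)"
  have Acol: "(\<Sum>i\<in>UNIV. A$i$k) \<le> c" for k
  proof -
    have "(\<Sum>i\<in>UNIV. A$i$k) \<le> real (card (UNIV::'n set)) * (E / (E + n - 1))"
      by (rule sum_bounded_above) (rule Ale)
    then show ?thesis unfolding c_def n_def by simp
  qed
  have c0: "c \<ge> 0" unfolding c_def using E1 n1 by simp
  have part2: "frob_norm (HC (A ** X ** WV)) \<le> sqrt c * spec_norm WV * frob_norm (HC X)"
    for WV :: "real^'d^'d"
  proof -
    define Y where "Y = HC X"
    define \<mu> :: "real^'d" where "\<mu> = (\<chi> l. (\<Sum>k\<in>UNIV. X$k$l) / n)"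
    have XY: "X$k$l = Y$k$l + \<mu>$l" for k l unfolding Y_def HC_def \<mu>_def n_def by simp
    have AXY: "(A ** X)$i$l = (A ** Y)$i$l + \<mu>$l" for i l
    proof -
      have "(A ** X)$i$l = (\<Sum>k\<in>UNIV. A$i$k * Y$k$l + A$i$k * \<mu>$l)"
        by (simp add: matrix_matrix_mult_def XY distrib_left)
      also have "\<dots> = (\<Sum>k\<in>UNIV. A$i$k * Y$k$l) + (\<Sum>k\<in>UNIV. A$i$k) * \<mu>$l"
        by (simp only: sum.distrib sum_distrib_right)
      finally have "(A ** X)$i$l = (\<Sum>k\<in>UNIV. A$i$k * Y$k$l) + (\<Sum>k\<in>UNIV. A$i$k) * \<mu>$l" .
      then show ?thesis using Arow by (simp add: matrix_matrix_mult_def)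
    qed
    define cv :: "real^'d" where "cv = (\<chi> j. \<Sum>l\<in>UNIV. \<mu>$l * WV$l$j)"
    have Zsh: "(A ** X ** WV)$i$j = ((A ** Y) ** WV)$i$j + cv$j" for i j
    proof -
      have "(A ** X ** WV)$i$j = (\<Sum>l\<in>UNIV. (A ** X)$i$l * WV$l$j)"
        by (simp only: matrix_matrix_mult_def vec_lambda_beta)
      also have "\<dots> = (\<Sum>l\<in>UNIV. (A ** Y)$i$l * WV$l$j + \<mu>$l * WV$l$j)"
        by (simp only: AXY distrib_right)
      also have "\<dots> = ((A ** Y) ** WV)$i$j + cv$j"
        by (simp only: sum.distrib cv_def matrix_matrix_mult_def[of "A ** Y" WV] vec_lambda_beta)
      finally show ?thesis .
    qed
    have "HC (A ** X ** WV) = HC ((A ** Y) ** WV)" by (rule HC_shift[OF Zsh])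
    then have "frob_norm (HC (A ** X ** WV)) \<le> frob_norm ((A ** Y) ** WV)"
      using frob_HC_le by metis
    moreover have "frob_norm ((A ** Y) ** WV)^2 \<le> (sqrt c * spec_norm WV * frob_norm Y)^2"
    proof -
      let ?S = "spec_norm WV"
      have S0: "0 \<le> ?S" unfolding spec_norm_def by (rule onorm_pos_le) simp
      have "frob_norm ((A ** Y) ** WV)^2 = (\<Sum>i\<in>UNIV. norm ((A ** Y)$i v* WV)^2)"
        by (simp add: frob_sq row_mul)
      also have "\<dots> \<le> (\<Sum>i\<in>UNIV. ?S^2 * norm ((A ** Y)$i)^2)"
      proof (rule sum_mono)
        fix i
        have "norm ((A ** Y)$i v* WV)^2 \<le> (?S * norm ((A ** Y)$i))^2"
          by (rule power_mono[OF vm_norm]) simp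
        then show "norm ((A ** Y)$i v* WV)^2 \<le> ?S^2 * norm ((A ** Y)$i)^2"
          by (simp only: power_mult_distrib)
      qed
      also have "\<dots> \<le> (\<Sum>i\<in>UNIV. ?S^2 * (\<Sum>k\<in>UNIV. A$i$k * norm (Y$k)^2))"
        apply (rule sum_mono)
        apply (rule mult_left_mono)
        unfolding row_mul2 using convex_norm[of UNIV "\<lambda>k. A$_$k"] A0 Arow by auto
      also have "\<dots> = ?S^2 * (\<Sum>k\<in>UNIV. (\<Sum>i\<in>UNIV. A$i$k) * norm (Y$k)^2)"
      proof -
        have "(\<Sum>i\<in>UNIV. \<Sum>k\<in>UNIV. A$i$k * norm (Y$k)^2) = (\<Sum>k\<in>UNIV. \<Sum>i\<in>UNIV. A$i$k * norm (Y$k)^2)"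
          by (rule sum.swap)
        also have "\<dots> = (\<Sum>k\<in>UNIV. (\<Sum>i\<in>UNIV. A$i$k) * norm (Y$k)^2)"
          by (simp only: sum_distrib_right)
        finally show ?thesis by (simp only: sum_distrib_left[symmetric])
      qed
      also have "\<dots> \<le> ?S^2 * (\<Sum>k\<in>UNIV. c * norm (Y$k)^2)"
        by (intro mult_left_mono sum_mono mult_right_mono Acol) auto
      also have "\<dots> = (sqrt c * ?S * frob_norm Y)^2"
        using c0 by (simp add: frob_sq power_mult_distrib sum_distrib_left mult_ac)
      finally show ?thesis .
    qed
    then have "frob_norm ((A ** Y) ** WV) \<le> sqrt c * spec_norm WV * frob_norm Y"
    proof (rule power2_le_imp_le)
      have "0 \<le> spec_norm WV" unfolding spec_norm_def by (rule onorm_pos_le) simp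
      moreover have "0 \<le> frob_norm Y" unfolding frob_norm_def by (intro real_sqrt_ge_zero sum_nonneg) simp
      ultimately show "0 \<le> sqrt c * spec_norm WV * frob_norm Y" using c0 by simp
    qed
    ultimately show ?thesis unfolding Y_def by linarith
  qed
  show ?thesis
    unfolding Let_def P_def[symmetric] A_def[symmetric] \<alpha>_def[symmetric] n_def[symmetric]
    using part1' part2 unfolding c_def E_def by blast
qed
end
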